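(* Let $g$ be a rational map of degree $d\ge2$ having $\infty$ as a repelling fixed point. Let $\gamma_1,\dots,\gamma_n$ ($n\ge2$) be independent Jordan curves in $\widehat{\mathbb C}$ such that: 1. $\infty\in\gamma_1\cap\dots\cap\gamma_n$; 2. all fixed points of $g$ in $\mathbb C$ are contained in $\mathrm{Int}(\gamma_1)\cup\dots\cup\mathrm{Int}(\gamma_n)$; 3. for each $k$, the number of poles of $g$ in $\overline{\mathrm{Ext}(\gamma_k)}\setminus\{\infty\}$ equals the number of fixed points of $g$ in $\overline{\mathrm{Ext}(\gamma_k)}\setminus\{\infty\}$. Then the number of poles of $g$ in $\overline{A(\gamma_1,\dots,\gamma_n)}\setminus\{\infty\}$ is exactly $n-1$.
   Context: Jordan curves $\gamma_1,\dots,\gamma_n$ are independent if $\gamma_i\cap\gamma_j$ is finite for $i\neq j$ and for each $k$ a component $\mathrm{Int}(\gamma_k)$ of $\widehat{\mathbb C}\setminus\gamma_k$ (the interior) is designated so that the interiors are pairwise disjoint; $\mathrm{Ext}(\gamma_k)$ is the other component, and $A(\gamma_1,\dots,\gamma_n)=\bigcap_k\mathrm{Ext}(\gamma_k)$. Poles are the points of $g^{-1}(\infty)\cap\mathbb C$, counted with multiplicity equal to their order; fixed points are counted with multiplicity. *)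

theory Defs
  imports "HOL-Complex_Analysis.Complex_Analysis" "HOL-Computational_Algebra.Polynomial"
begin

(* The Riemann sphere: complex option, None = infinity, with the one-point
   compactification topology of the complex plane. *)
definition riemann_sphere_open :: "complex option set \<Rightarrow> bool" where
  "riemann_sphere_open U \<longleftrightarrow>
     open {z. Some z \<in> U} \<and> (None \<in> U \<longrightarrow> compact (- {z. Some z \<in> U}))"

lemma istopology_riemann_sphere_open: "istopology riemann_sphere_open"
proof -
  have I: "riemann_sphere_open (S \<inter> T)"
    if S: "riemann_sphere_open S" and T: "riemann_sphere_open T" for S T
  proof -
    have eq: "{z. Some z \<in> S \<inter> T} = {z. Some z \<in> S} \<inter> {z. Some z \<in> T}" by auto
    have o: "open {z. Some z \<in> S \<inter> T}" unfolding eq using S T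
      by (intro open_Int) (auto simp: riemann_sphere_open_def)
    have c: "compact (- {z. Some z \<in> S \<inter> T})" if "None \<in> S \<inter> T"
    proof -
      have "compact (- {z. Some z \<in> S} \<union> - {z. Some z \<in> T})"
        using S T that by (intro compact_Un) (auto simp: riemann_sphere_open_def)
      moreover have "- {z. Some z \<in> S \<inter> T} = - {z. Some z \<in> S} \<union> - {z. Some z \<in> T}" by auto
      ultimately show ?thesis by simp
    qed
    show ?thesis using o c unfolding riemann_sphere_open_def by blast
  qed
  have U: "riemann_sphere_open (\<Union>K)" if K: "\<forall>U\<in>K. riemann_sphere_open U" for K
  proof -
    have eq: "{z. Some z \<in> \<Union>K} = (\<Union>U\<in>K. {z. Some z \<in> U})" by auto
    have o: "open {z. Some z \<in> \<Union>K}" unfolding eq using K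
      by (auto simp: riemann_sphere_open_def)
    have c: "compact (- {z. Some z \<in> \<Union>K})" if N: "None \<in> \<Union>K"
    proof -
      obtain U where U: "U \<in> K" "None \<in> U" using N by auto
      have c: "compact (- {z. Some z \<in> U})" using K U by (auto simp: riemann_sphere_open_def)
      have sub: "- {z. Some z \<in> \<Union>K} \<subseteq> - {z. Some z \<in> U}" using U by auto
      have cl: "closed (- {z. Some z \<in> \<Union>K})" using o by (simp add: closed_Compl)
      show ?thesis using compact_Int_closed[OF c cl] sub by (metis inf.absorb_iff2)
    qed
    show ?thesis using o c unfolding riemann_sphere_open_def by blast
  qed
  show ?thesis unfolding istopology_def using I U by blast
qed

definition riemann_sphere :: "complex option topology" where
  "riemann_sphere = topology riemann_sphere_open"

definition jordan_curve_RS :: "complex option set \<Rightarrow> bool" where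
  "jordan_curve_RS \<gamma> \<longleftrightarrow>
     (\<exists>f. continuous_map (subtopology euclidean (sphere (0::complex) 1)) riemann_sphere f
          \<and> inj_on f (sphere 0 1) \<and> f ` sphere 0 1 = \<gamma>)"

definition independent_jordan_curves ::
  "nat \<Rightarrow> (nat \<Rightarrow> complex option set) \<Rightarrow> (nat \<Rightarrow> complex option set)
       \<Rightarrow> (nat \<Rightarrow> complex option set) \<Rightarrow> bool" where
  "independent_jordan_curves n \<gamma> Intr Ext \<longleftrightarrow>
     (\<forall>k\<in>{1..n}. jordan_curve_RS (\<gamma> k)) \<and>
     (\<forall>i\<in>{1..n}. \<forall>j\<in>{1..n}. i \<noteq> j \<longrightarrow> finite (\<gamma> i \<inter> \<gamma> j)) \<and>
     (\<forall>k\<in>{1..n}.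
        Intr k \<in> connected_components_of (subtopology riemann_sphere (- \<gamma> k)) \<and>
        Ext k \<in> connected_components_of (subtopology riemann_sphere (- \<gamma> k)) \<and>
        Intr k \<noteq> Ext k) \<and>
     (\<forall>i\<in>{1..n}. \<forall>j\<in>{1..n}. i \<noteq> j \<longrightarrow> Intr i \<inter> Intr j = {})"

(* Rational map g = p/q (p, q coprime, q \<noteq> 0) on the finite plane. *)
definition rat_fun :: "complex poly \<Rightarrow> complex poly \<Rightarrow> complex \<Rightarrow> complex" where
  "rat_fun p q z = poly p z / poly q z"

definition rat_degree :: "complex poly \<Rightarrow> complex poly \<Rightarrow> nat" where
  "rat_degree p q = max (degree p) (degree q)"

(* infinity is a repelling fixed point: in the chart w = 1/z, the map
   w \<mapsto> 1/g(1/w) extends holomorphically to 0, fixes 0, and has multiplier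
   of modulus > 1 there. *)
definition repelling_fixed_at_infinity :: "complex poly \<Rightarrow> complex poly \<Rightarrow> bool" where
  "repelling_fixed_at_infinity p q \<longleftrightarrow>
     (\<exists>r>0. \<exists>G. G holomorphic_on ball 0 r \<and> G 0 = 0 \<and>
        (\<forall>w\<in>ball 0 r - {0}. G w = inverse (rat_fun p q (inverse w))) \<and>
        1 < cmod (deriv G 0))"

definition pole_count :: "complex poly \<Rightarrow> complex poly \<Rightarrow> complex set \<Rightarrow> nat" where
  "pole_count p q S = (\<Sum>z\<in>{z\<in>S. poly q z = 0}. order z q)"

(* Finite fixed points of p/q are the roots of p - z q; multiplicity = order. *)
definition fixpt_count :: "complex poly \<Rightarrow> complex poly \<Rightarrow> complex set \<Rightarrow> nat" where
  "fixpt_count p q S =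
     (\<Sum>z\<in>{z\<in>S. poly (p - [:0, 1:] * q) z = 0}. order z (p - [:0, 1:] * q))"

definition finite_part :: "complex option set \<Rightarrow> complex set" where
  "finite_part X = {z. Some z \<in> X}"

end

theory Submission
  imports Defs "HOL-Computational_Algebra.Fundamental_Theorem_Algebra"
begin

lemma repelling_degree:
  assumes q: "q \<noteq> 0" and rep: "repelling_fixed_at_infinity p q"
  shows "degree p = Suc (degree q) \<and> lead_coeff p \<noteq> lead_coeff q"
proof -
  obtain r G where r: "r > 0" and Gh: "G holomorphic_on ball 0 r" and G0: "G 0 = 0"
    and GE: "\<forall>w\<in>ball 0 r - {0}. G w = inverse (rat_fun p q (inverse w))"
    and L: "1 < cmod (deriv G 0)"
    using rep unfolding repelling_fixed_at_infinity_def by blast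
  define L where "L = deriv G 0"
  have "(G has_field_derivative L) (at 0)"
    unfolding L_def using Gh r by (intro holomorphic_derivI[where S="ball 0 r"]) auto
  hence lim: "((\<lambda>w. G w / w) \<longlongrightarrow> L) (at 0)"
    using G0 by (simp add: has_field_derivative_iff)
  have evb: "eventually (\<lambda>w. w \<in> ball 0 r - {0}) (at (0::complex))"
    using r by (auto simp: eventually_at intro!: exI[of _ r] simp: dist_commute)
  have p: "p \<noteq> 0"
  proof
    assume "p = 0"
    have "eventually (\<lambda>w. G w / w = 0) (at 0)"
      using evb by (rule eventually_mono) (use GE \<open>p = 0\<close> in \<open>auto simp: rat_fun_def\<close>)
    hence "((\<lambda>w. G w / w) \<longlongrightarrow> 0) (at 0)"
      by (rule tendsto_eventually)
    with lim have "L = 0" by (intro tendsto_unique[OF _ lim]) auto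
    with L show False by (simp add: L_def)
  qed
  define D where "D = degree p"
  define E where "E = degree q"
  define c where "c = lead_coeff q / lead_coeff p"
  have c0: "c \<noteq> 0" using p q by (simp add: c_def)
  define h where "h w = poly (reflect_poly q) w / poly (reflect_poly p) w" for w
  have hlim: "(h \<longlongrightarrow> c) (at 0)"
  proof -
    have "isCont h 0" unfolding h_def using p by (intro continuous_intros) (simp add: poly_reflect_poly_0)
    thus ?thesis by (simp add: isCont_def h_def c_def poly_reflect_poly_0)
  qed
  have "((\<lambda>w. poly (reflect_poly p) w) \<longlongrightarrow> poly (reflect_poly p) 0) (at 0)"
    by (intro tendsto_intros)
  hence evp: "eventually (\<lambda>w. poly (reflect_poly p) w \<noteq> 0) (at 0)"
    using p by (intro tendsto_imp_eventually_ne) (auto simp: poly_reflect_poly_0)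
  have ident: "eventually (\<lambda>w. G w / w * w ^ Suc E = w ^ D * h w) (at 0)"
    using evb evp
  proof eventually_elim
    case (elim w)
    hence w: "w \<noteq> 0" and pw: "poly (reflect_poly p) w \<noteq> 0" by auto
    have "G w = poly q (inverse w) / poly p (inverse w)"
      using GE elim by (simp add: rat_fun_def)
    also have "poly q (inverse w) = poly (reflect_poly q) w / w ^ E"
      using w by (simp add: poly_reflect_poly_nz E_def)
    also have "poly p (inverse w) = poly (reflect_poly p) w / w ^ D"
      using w by (simp add: poly_reflect_poly_nz D_def)
    finally show ?case using w pw by (simp add: h_def field_simps)
  qed
  have "D = Suc E \<and> L = c"
  proof (cases "Suc E \<le> D")
    case True
    have "eventually (\<lambda>w. G w / w = w ^ (D - Suc E) * h w) (at 0)"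
      using ident evb
    proof eventually_elim
      case (elim w)
      have "w ^ D = w ^ (D - Suc E) * w ^ Suc E" using True by (simp only: power_add[symmetric]) simp
      hence "G w / w * w ^ Suc E = w ^ (D - Suc E) * h w * w ^ Suc E"
        using elim(1) by (simp add: mult_ac)
      thus ?case using elim by simp
    qed
    hence lim2: "((\<lambda>w. w ^ (D - Suc E) * h w) \<longlongrightarrow> L) (at 0)"
      using lim by (rule Lim_transform_eventually[rotated])
    have lim3: "((\<lambda>w. w ^ (D - Suc E) * h w) \<longlongrightarrow> 0 ^ (D - Suc E) * c) (at 0)"
      by (intro tendsto_intros hlim)
    have "L = 0 ^ (D - Suc E) * c" using tendsto_unique[OF _ lim2 lim3] by simp
    moreover have "L \<noteq> 0" using L by (auto simp: L_def)
    ultimately have "D = Suc E" using True by (cases "D - Suc E") auto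
    thus ?thesis using \<open>L = 0 ^ (D - Suc E) * c\<close> by simp
  next
    case False
    have "eventually (\<lambda>w. G w / w * w ^ (Suc E - D) = h w) (at 0)"
      using ident evb
    proof eventually_elim
      case (elim w)
      have "w ^ Suc E = w ^ (Suc E - D) * w ^ D" using False by (simp only: power_add[symmetric]) simp
      hence "G w / w * w ^ (Suc E - D) * w ^ D = h w * w ^ D"
        using elim(1) by (simp add: mult_ac)
      moreover have "w ^ D \<noteq> 0" using elim by simp
      ultimately show ?case by (metis mult_right_cancel)
    qed
    moreover have "((\<lambda>w. G w / w * w ^ (Suc E - D)) \<longlongrightarrow> L * 0 ^ (Suc E - D)) (at 0)"
      by (intro tendsto_intros lim)
    ultimately have "(h \<longlongrightarrow> L * 0 ^ (Suc E - D)) (at 0)"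
      by (rule Lim_transform_eventually[rotated])
    hence "c = L * 0 ^ (Suc E - D)" using tendsto_unique[OF _ hlim] by simp
    with False c0 have False by simp
    thus ?thesis ..
  qed
  moreover have "lead_coeff p \<noteq> lead_coeff q"
  proof
    assume "lead_coeff p = lead_coeff q"
    hence "c = 1" using p q by (simp add: c_def)
    with \<open>D = Suc E \<and> L = c\<close> L show False by (simp add: L_def)
  qed
  ultimately show ?thesis by (simp add: D_def E_def)
qed

definition cnt :: "complex poly \<Rightarrow> complex set \<Rightarrow> nat" where
  "cnt r S = (\<Sum>z\<in>{z\<in>S. poly r z = 0}. order z r)"

lemma sum_order_eq_degree:
  fixes r :: "complex poly"
  assumes "r \<noteq> 0"
  shows "(\<Sum>z\<in>{z. poly r z = 0}. order z r) = degree r"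
proof -
  have "degree r = size (proots r)" by (simp add: size_proots_complex)
  also have "\<dots> = (\<Sum>z\<in>set_mset (proots r). count (proots r) z)"
    by (rule size_multiset_overloaded_eq)
  also have "\<dots> = (\<Sum>z\<in>{z. poly r z = 0}. order z r)"
    using assms by (intro sum.cong) (auto simp: count_proots)
  finally show ?thesis by simp
qed

lemma cnt_superset:
  assumes "r \<noteq> 0" "{z. poly r z = 0} \<subseteq> S"
  shows "cnt r S = degree r"
proof -
  have "{z\<in>S. poly r z = 0} = {z. poly r z = 0}" using assms by auto
  thus ?thesis using sum_order_eq_degree[OF assms(1)] by (simp add: cnt_def)
qed

lemma cnt_split:
  assumes "r \<noteq> 0"
  shows "cnt r S + cnt r (- S) = degree r"
proof -
  have fin: "finite {z. poly r z = 0}" using assms by (simp add: poly_roots_finite)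
  have "cnt r S + cnt r (- S) = (\<Sum>z\<in>{z\<in>S. poly r z = 0} \<union> {z\<in>-S. poly r z = 0}. order z r)"
    unfolding cnt_def by (rule sum.union_disjoint[symmetric]) (use fin in auto)
  also have "{z\<in>S. poly r z = 0} \<union> {z\<in>-S. poly r z = 0} = {z. poly r z = 0}" by auto
  finally show ?thesis using sum_order_eq_degree[OF assms] by simp
qed

lemma cnt_UN:
  assumes "r \<noteq> 0" "finite K" "\<And>i j. i \<in> K \<Longrightarrow> j \<in> K \<Longrightarrow> i \<noteq> j \<Longrightarrow> A i \<inter> A j = {}"
  shows "cnt r (\<Union>k\<in>K. A k) = (\<Sum>k\<in>K. cnt r (A k))"
proof -
  have fin: "finite {z. poly r z = 0}" using assms by (simp add: poly_roots_finite)
  have "{z\<in>(\<Union>k\<in>K. A k). poly r z = 0} = (\<Union>k\<in>K. {z\<in>A k. poly r z = 0})" by auto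
  hence "cnt r (\<Union>k\<in>K. A k) = (\<Sum>z\<in>(\<Union>k\<in>K. {z\<in>A k. poly r z = 0}). order z r)"
    by (simp add: cnt_def)
  also have "\<dots> = (\<Sum>k\<in>K. cnt r (A k))" unfolding cnt_def
    by (rule sum.UNION_disjoint) (use assms fin in \<open>auto intro: finite_subset\<close>)
  finally show ?thesis .
qed

lemma coprime_no_common_root:
  fixes p q :: "complex poly"
  assumes "coprime p q" "poly p z = 0" "poly q z = 0"
  shows False
proof -
  have "[:-z, 1:] dvd p" "[:-z, 1:] dvd q" using assms by (simp_all add: poly_eq_0_iff_dvd)
  hence "is_unit [:-z, 1:]" using assms(1) coprime_common_divisor by blast
  thus False by (simp add: is_unit_iff_degree)
qed

lemma closure_ext_eq:
  fixes I E G :: "complex set"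
  assumes "open I" "I \<inter> E = {}" "I \<union> E = - G" "G \<subseteq> closure E"
  shows "closure E = - I"
proof
  show "closure E \<subseteq> - I"
    using assms by (intro closure_minimal) auto
  show "- I \<subseteq> closure E" using assms closure_subset by blast
qed

lemma jordan_noniso:
  fixes I E G :: "complex set"
  assumes "open I" "open E" "I \<inter> E = {}" "I \<union> E = - G" "G \<subseteq> closure I" "G \<subseteq> closure E"
    and w: "w \<in> G" and d: "d > 0"
  shows "\<exists>v\<in>G. v \<noteq> w \<and> dist v w < d"
proof (rule ccontr)
  assume "\<not> ?thesis"
  hence sub: "ball w d - {w} \<subseteq> I \<union> E" using assms(4) by (auto simp: dist_commute)
  have con: "connected (ball w d - {w})" by (rule connected_punctured_ball) simp
  obtain y where y: "y \<in> I" "dist y w < d" using w assms(5) d closure_approachable by blast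
  obtain y' where y': "y' \<in> E" "dist y' w < d" using w assms(6) d closure_approachable by blast
  have "y \<noteq> w" "y' \<noteq> w" using y y' w assms(4) by auto
  hence "I \<inter> (ball w d - {w}) \<noteq> {}" "E \<inter> (ball w d - {w}) \<noteq> {}"
    using y y' by (auto simp: dist_commute)
  moreover have "I \<inter> E \<inter> (ball w d - {w}) = {}" using assms(3) by auto
  ultimately show False
    using connectedD[OF con assms(1) assms(2) _ sub] by blast
qed

lemma closure_Inter_ext:
  fixes G I E :: "nat \<Rightarrow> complex set" and K :: "nat set"
  assumes finK: "finite K"
    and J: "\<And>k. k \<in> K \<Longrightarrow> open (I k) \<and> open (E k) \<and> I k \<inter> E k = {} \<and> I k \<union> E k = - G k
               \<and> G k \<subseteq> closure (I k) \<and> G k \<subseteq> closure (E k)"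
    and disjI: "\<And>i j. i \<in> K \<Longrightarrow> j \<in> K \<Longrightarrow> i \<noteq> j \<Longrightarrow> I i \<inter> I j = {}"
    and finG: "\<And>i j. i \<in> K \<Longrightarrow> j \<in> K \<Longrightarrow> i \<noteq> j \<Longrightarrow> finite (G i \<inter> G j)"
  shows "closure (\<Inter>k\<in>K. E k) = - (\<Union>k\<in>K. I k)"
proof
  show "closure (\<Inter>k\<in>K. E k) \<subseteq> - (\<Union>k\<in>K. I k)"
  proof -
    have "closure (\<Inter>k\<in>K. E k) \<subseteq> closure (E k)" if "k \<in> K" for k
      using that by (intro closure_mono) auto
    moreover have "closure (E k) = - I k" if "k \<in> K" for k
      using J[OF that] by (intro closure_ext_eq[of _ _ "G k"]) auto
    ultimately show ?thesis by blast
  qed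
next
  show "- (\<Union>k\<in>K. I k) \<subseteq> closure (\<Inter>k\<in>K. E k)"
  proof
    fix z assume z: "z \<in> - (\<Union>k\<in>K. I k)"
    show "z \<in> closure (\<Inter>k\<in>K. E k)"
    proof (rule ccontr)
      assume "z \<notin> closure (\<Inter>k\<in>K. E k)"
      then obtain e where e: "e > 0" and eA: "\<And>y. y \<in> (\<Inter>k\<in>K. E k) \<Longrightarrow> e \<le> dist y z"
        unfolding closure_approachable by (auto simp: not_less)
      have "\<exists>k\<in>K. z \<in> G k"
      proof (rule ccontr)
        assume "\<not> ?thesis"
        hence "z \<in> (\<Inter>k\<in>K. E k)" using z J by blast
        with eA e show False by fastforce
      qed
      then obtain k where k: "k \<in> K" "z \<in> G k" by blast
      define F where "F = (\<Union>j\<in>K-{k}. G k \<inter> G j)"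
      have "finite F" unfolding F_def using finK finG k by (intro finite_UN_I) auto
      then obtain \<delta> where \<delta>: "\<delta> > 0" "\<And>x. x \<in> F \<Longrightarrow> x \<noteq> z \<Longrightarrow> \<delta> \<le> dist z x"
        using finite_set_avoid[of F z] by auto
      have "\<exists>v\<in>G k. v \<noteq> z \<and> dist v z < min e \<delta>"
        using J[OF k(1)] by (intro jordan_noniso[of "I k" "E k"]) (use k e \<delta> in auto)
      then obtain v where v: "v \<in> G k" "v \<noteq> z" "dist v z < min e \<delta>" by blast
      have vF: "v \<notin> F"
      proof
        assume "v \<in> F"
        hence "\<delta> \<le> dist z v" using \<delta>(2) v(2) by blast
        thus False using v(3) by (simp add: dist_commute)
      qed
      define C where "C = (\<Union>j\<in>K-{k}. G j)"
      have clG: "closed (G j)" if "j \<in> K" for j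
      proof -
        have "open (- G j)" using J[OF that] by (metis open_Un)
        thus "closed (G j)" by (simp add: closed_open)
      qed
      have "closed C" unfolding C_def using finK clG by (intro closed_UN) auto
      moreover have "v \<notin> C" using vF v unfolding C_def F_def by auto
      ultimately obtain d1 where d1: "d1 > 0" "ball v d1 \<subseteq> - C"
        by (metis open_contains_ball closed_def ComplI)
      define d2 where "d2 = min d1 (e - dist v z)"
      have d2: "d2 > 0" using d1 v unfolding d2_def by auto
      define D where "D = ball v d2"
      have DB: "\<And>y. y \<in> D \<Longrightarrow> dist y z < e"
      proof -
        fix y assume "y \<in> D"
        hence "dist y v < e - dist v z" by (simp add: D_def d2_def dist_commute)
        thus "dist y z < e" using dist_triangle[of y z v] by linarith
      qed
      have "D \<subseteq> ball v d1" unfolding D_def d2_def by (rule subset_ball) simp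
      hence DC0: "D \<subseteq> - C" using d1(2) by blast
      have DC: "D \<inter> G j = {}" if "j \<in> K" "j \<noteq> k" for j
      proof -
        have "G j \<subseteq> C" unfolding C_def using that by blast
        thus ?thesis using DC0 by blast
      qed
      have vE: "v \<in> closure (E k)" "v \<in> closure (I k)" using J[OF k(1)] v(1) by blast+
      obtain u where u: "u \<in> E k" "dist u v < d2"
        using vE(1) d2 unfolding closure_approachable by blast
      have uD: "u \<in> D" using u by (simp add: D_def dist_commute)
      hence "u \<notin> (\<Inter>k\<in>K. E k)" using DB eA by force
      then obtain j where j: "j \<in> K" "u \<notin> E j" by blast
      have jk: "j \<noteq> k" using j u by auto
      have "u \<notin> G j" using DC[OF j(1) jk] uD by auto
      hence uI: "u \<in> I j" using J[OF j(1)] j(2) by blast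
      have "D \<subseteq> I j \<union> E j" using DC[OF j(1) jk] J[OF j(1)] by auto
      moreover have "connected D" by (simp add: D_def)
      moreover have "I j \<inter> E j \<inter> D = {}" using J[OF j(1)] by auto
      ultimately have "I j \<inter> D = {} \<or> E j \<inter> D = {}"
        using connectedD[of D "I j" "E j"] J[OF j(1)] by blast
      hence DI: "D \<subseteq> I j" using uI uD \<open>D \<subseteq> I j \<union> E j\<close> by blast
      obtain t where t: "t \<in> I k" "dist t v < d2"
        using vE(2) d2 unfolding closure_approachable by blast
      have "t \<in> D" using t by (simp add: D_def dist_commute)
      hence "t \<in> I j \<inter> I k" using DI t by auto
      thus False using disjI[OF j(1) k(1) jk] by auto
    qed
  qed
qed

lemma openin_RS: "openin riemann_sphere = riemann_sphere_open"
  by (simp add: riemann_sphere_def topology_inverse' istopology_riemann_sphere_open)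

lemma topspace_RS: "topspace riemann_sphere = UNIV"
proof -
  have "riemann_sphere_open UNIV" by (simp add: riemann_sphere_open_def)
  thus ?thesis unfolding topspace_def openin_RS by blast
qed

lemma fp_Some_image [simp]: "finite_part (Some ` V) = V"
  by (auto simp: finite_part_def)

lemma Collect_Some_image [simp]: "{z. Some z \<in> Some ` V} = V"
  by auto

lemma RS_open_Some: "openin riemann_sphere (Some ` V) \<longleftrightarrow> open V"
  by (simp add: openin_RS riemann_sphere_open_def)

lemma cont_Some: "continuous_map euclidean riemann_sphere Some"
  unfolding continuous_map_def topspace_RS openin_RS riemann_sphere_open_def by auto

lemma RS_closure_fp: "finite_part (riemann_sphere closure_of X) = closure (finite_part X)"
proof (rule set_eqI)
  fix z
  have "z \<in> finite_part (riemann_sphere closure_of X) \<longleftrightarrow>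
        (\<forall>T. Some z \<in> T \<and> riemann_sphere_open T \<longrightarrow> (\<exists>y. y \<in> X \<and> y \<in> T))"
    by (simp add: finite_part_def in_closure_of topspace_RS openin_RS)
  also have "\<dots> \<longleftrightarrow> (\<forall>V. z \<in> V \<and> open V \<longrightarrow> (\<exists>y. y \<in> finite_part X \<and> y \<in> V))"
  proof
    assume H: "\<forall>T. Some z \<in> T \<and> riemann_sphere_open T \<longrightarrow> (\<exists>y. y \<in> X \<and> y \<in> T)"
    show "\<forall>V. z \<in> V \<and> open V \<longrightarrow> (\<exists>y. y \<in> finite_part X \<and> y \<in> V)"
    proof (intro allI impI)
      fix V assume V: "z \<in> V \<and> open V"
      hence "riemann_sphere_open (Some ` V)" using RS_open_Some openin_RS by metis
      then obtain y where "y \<in> X" "y \<in> Some ` V" using H V by blast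
      thus "\<exists>y. y \<in> finite_part X \<and> y \<in> V" by (auto simp: finite_part_def)
    qed
  next
    assume H: "\<forall>V. z \<in> V \<and> open V \<longrightarrow> (\<exists>y. y \<in> finite_part X \<and> y \<in> V)"
    show "\<forall>T. Some z \<in> T \<and> riemann_sphere_open T \<longrightarrow> (\<exists>y. y \<in> X \<and> y \<in> T)"
    proof (intro allI impI)
      fix T assume T: "Some z \<in> T \<and> riemann_sphere_open T"
      hence "open (finite_part T)" "z \<in> finite_part T"
        by (auto simp: riemann_sphere_open_def finite_part_def)
      then obtain y where "y \<in> finite_part X" "y \<in> finite_part T" using H by blast
      thus "\<exists>y. y \<in> X \<and> y \<in> T" by (auto simp: finite_part_def)
    qed
  qed
  also have "\<dots> \<longleftrightarrow> z \<in> closure (finite_part X)"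
    by (auto simp: closure_iff_nhds_not_empty)
  finally show "z \<in> finite_part (riemann_sphere closure_of X) \<longleftrightarrow> z \<in> closure (finite_part X)" .
qed

definition Mb :: "complex \<Rightarrow> complex option \<Rightarrow> complex" where
  "Mb a x = (case x of None \<Rightarrow> 0 | Some z \<Rightarrow> 1 / (z - a))"

lemma cont_Mb: "continuous_map (subtopology riemann_sphere (- {Some a})) euclidean (Mb a)"
  unfolding continuous_map_def
proof (intro conjI allI impI)
  show "Mb a \<in> topspace (subtopology riemann_sphere (- {Some a})) \<rightarrow> topspace euclidean" by simp
  fix U :: "complex set" assume "openin euclidean U"
  hence U: "open U" by simp
  define T where "T = {x \<in> topspace (subtopology riemann_sphere (- {Some a})). Mb a x \<in> U}"
  have T: "T = {x. x \<noteq> Some a \<and> Mb a x \<in> U}" by (auto simp: T_def topspace_RS)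
  have fpT: "finite_part T = (- {a}) \<inter> (\<lambda>z. 1 / (z - a)) -` U"
    by (auto simp: T finite_part_def Mb_def)
  have "riemann_sphere_open T"
    unfolding riemann_sphere_open_def
  proof (intro conjI impI)
    have "continuous_on (- {a}) (\<lambda>z. 1 / (z - a))" by (intro continuous_intros) auto
    hence "open ((\<lambda>z. 1 / (z - a)) -` U \<inter> (- {a}))"
      using U by (subst (asm) continuous_on_open_vimage) auto
    thus "open {z. Some z \<in> T}" using fpT by (simp add: finite_part_def Int_commute)
    assume "None \<in> T"
    hence "0 \<in> U" by (simp add: T Mb_def)
    then obtain e where e: "e > 0" "ball 0 e \<subseteq> U" using U open_contains_ball by blast
    have sub: "- {z. Some z \<in> T} \<subseteq> cball a (1 / e)"
    proof
      fix z assume "z \<in> - {z. Some z \<in> T}"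
      hence z: "z = a \<or> 1 / (z - a) \<notin> U" by (auto simp: T Mb_def)
      show "z \<in> cball a (1 / e)"
      proof (cases "z = a")
        case False
        hence "1 / (z - a) \<notin> ball 0 e" using z e by blast
        hence "e \<le> 1 / cmod (z - a)" by (simp add: norm_divide)
        hence "cmod (z - a) \<le> 1 / e" using e False
          by (simp add: field_simps)
        thus ?thesis by (simp add: dist_norm norm_minus_commute)
      qed (use e in auto)
    qed
    have cl: "closed (- {z. Some z \<in> T})"
      using \<open>open {z. Some z \<in> T}\<close> by (simp add: closed_Compl)
    have "bounded (- {z. Some z \<in> T})" by (rule bounded_subset[OF bounded_cball sub])
    thus "compact (- {z. Some z \<in> T})" using cl by (simp add: compact_eq_bounded_closed)
  qed
  hence "openin riemann_sphere T" by (simp add: openin_RS)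
  hence "openin (subtopology riemann_sphere (- {Some a})) (T \<inter> - {Some a})"
    by (rule openin_subtopology_Int)
  moreover have "T \<inter> - {Some a} = T" using T by auto
  ultimately show "openin (subtopology riemann_sphere (- {Some a})) T" by simp
qed

lemma components_two:
  assumes "openin X U1" "openin X U2" "connectedin X U1" "connectedin X U2"
    "U1 \<inter> U2 = {}" "U1 \<union> U2 = T" "C \<in> connected_components_of (subtopology X T)"
  shows "C = U1 \<or> C = U2"
proof -
  have Cne: "C \<noteq> {}" using assms(7) nonempty_connected_components_of by blast
  have "connectedin (subtopology X T) C" using assms(7) connectedin_connected_components_of by blast
  hence Cc: "connectedin X C" "C \<subseteq> T" by (simp_all add: connectedin_subtopology)
  have "\<not> (C \<subseteq> U1 \<union> U2 \<and> U1 \<inter> U2 \<inter> C = {} \<and> U1 \<inter> C \<noteq> {} \<and> U2 \<inter> C \<noteq> {})"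
    using Cc(1) assms(1,2) unfolding connectedin by blast
  hence "U1 \<inter> C = {} \<or> U2 \<inter> C = {}" using Cc(2) assms(5,6) by blast
  thus ?thesis
  proof
    assume "U1 \<inter> C = {}"
    hence "C \<subseteq> U2" using Cc(2) assms(6) by blast
    moreover have "connectedin (subtopology X T) U2" using assms(4,6) by (auto simp: connectedin_subtopology)
    moreover have "\<not> disjnt C U2" using \<open>C \<subseteq> U2\<close> Cne by (auto simp: disjnt_def)
    ultimately have "U2 \<subseteq> C" using connected_components_of_maximal[OF assms(7)] by blast
    with \<open>C \<subseteq> U2\<close> show ?thesis by blast
  next
    assume "U2 \<inter> C = {}"
    hence "C \<subseteq> U1" using Cc(2) assms(6) by blast
    moreover have "connectedin (subtopology X T) U1" using assms(3,6) by (auto simp: connectedin_subtopology)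
    moreover have "\<not> disjnt C U1" using \<open>C \<subseteq> U1\<close> Cne by (auto simp: disjnt_def)
    ultimately have "U1 \<subseteq> C" using connected_components_of_maximal[OF assms(7)] by blast
    with \<open>C \<subseteq> U1\<close> show ?thesis by blast
  qed
qed

lemma inv_closure_lemma:
  fixes X :: "complex set" and a w0 :: complex
  assumes "0 \<notin> X" "w0 \<in> closure X" "w0 \<noteq> 0"
  shows "a + 1 / w0 \<in> closure {z. z \<noteq> a \<and> 1 / (z - a) \<in> X}"
proof -
  obtain s where s: "\<And>n. s n \<in> X" "s \<longlonglongrightarrow> w0" using assms(2) closure_sequential by blast
  have "(\<lambda>n. a + 1 / s n) \<longlonglongrightarrow> a + 1 / w0"
    using assms(3) by (intro tendsto_intros s(2)) auto
  moreover have "a + 1 / s n \<in> {z. z \<noteq> a \<and> 1 / (z - a) \<in> X}" for n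
  proof -
    have "s n \<noteq> 0" using s(1) assms(1) by metis
    thus ?thesis using s(1)[of n] by simp
  qed
  ultimately show ?thesis unfolding closure_sequential by (intro exI[where x="\<lambda>n. a + 1 / s n"]) blast
qed

lemma jordan_RS_transfer:
  assumes jc: "jordan_curve_RS \<gamma>" and inf: "None \<in> \<gamma>"
    and I: "I \<in> connected_components_of (subtopology riemann_sphere (- \<gamma>))"
    and E: "E \<in> connected_components_of (subtopology riemann_sphere (- \<gamma>))"
    and IE: "I \<noteq> E"
  shows "open (finite_part I) \<and> open (finite_part E) \<and> finite_part I \<inter> finite_part E = {}
    \<and> finite_part I \<union> finite_part E = - finite_part \<gamma>
    \<and> finite_part \<gamma> \<subseteq> closure (finite_part I) \<and> finite_part \<gamma> \<subseteq> closure (finite_part E)"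
proof -
  obtain f where fc: "continuous_map (subtopology euclidean (sphere (0::complex) 1)) riemann_sphere f"
    and finj: "inj_on f (sphere 0 1)" and fim: "f ` sphere 0 1 = \<gamma>"
    using jc unfolding jordan_curve_RS_def by blast
  have "I \<subseteq> - \<gamma>" using connected_components_of_subset[OF I] by (simp add: topspace_RS)
  moreover obtain x where "x \<in> I" using nonempty_connected_components_of[OF I] by blast
  ultimately have "x \<notin> \<gamma>" by blast
  with inf obtain a where xa: "x = Some a" by (cases x) auto
  with \<open>x \<notin> \<gamma>\<close> have a\<gamma>: "Some a \<notin> \<gamma>" by simp
  have fg: "f y \<in> \<gamma>" if "y \<in> sphere 0 1" for y using fim that by blast
  have fa: "f y \<noteq> Some a" if "y \<in> sphere 0 1" for y using fg[OF that] a\<gamma> by auto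
  define M where "M = Mb a"
  define \<phi> where "\<phi> = M \<circ> f"
  have "f \<in> sphere 0 1 \<rightarrow> - {Some a}"
  proof (rule Pi_I)
    fix x :: complex assume "x \<in> sphere 0 1"
    hence "f x \<in> \<gamma>" using fim by blast
    thus "f x \<in> - {Some a}" using a\<gamma> by auto
  qed
  hence "continuous_map (subtopology euclidean (sphere 0 1)) (subtopology riemann_sphere (- {Some a})) f"
    using fc by (intro continuous_map_into_subtopology) auto
  hence "continuous_map (subtopology euclidean (sphere 0 1)) euclidean \<phi>"
    unfolding \<phi>_def M_def using cont_Mb by (rule continuous_map_compose)
  hence \<phi>c: "continuous_on (sphere 0 1) \<phi>" by (simp add: continuous_map_iff_continuous)
  have Minj: "M u = M v \<Longrightarrow> u \<noteq> Some a \<Longrightarrow> v \<noteq> Some a \<Longrightarrow> u = v" for u v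
    by (cases u; cases v) (auto simp: M_def Mb_def)
  have \<phi>inj: "inj_on \<phi> (sphere 0 1)"
  proof (rule inj_onI)
    fix u v assume uv: "u \<in> sphere 0 1" "v \<in> sphere 0 1" "\<phi> u = \<phi> v"
    have "f u \<noteq> Some a" "f v \<noteq> Some a" using fa uv(1,2) by blast+
    hence "f u = f v" using Minj uv(3) by (simp add: \<phi>_def)
    thus "u = v" using finj uv inj_onD by metis
  qed
  define c where "c = \<phi> \<circ> circlepath 0 1"
  have pic: "path_image (circlepath (0::complex) 1) = sphere 0 1" by simp
  have sp: "simple_path c" unfolding c_def
    by (rule simple_path_continuous_image) (use \<phi>c \<phi>inj in \<open>simp_all add: simple_path_circlepath\<close>)
  have loop: "pathfinish c = pathstart c"
    by (simp add: c_def pathfinish_compose pathstart_compose)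
  define S where "S = path_image c"
  have S: "S = \<phi> ` sphere 0 1" by (simp add: S_def c_def path_image_compose)
  define Ins where "Ins = inside S"
  define Out where "Out = outside S"
  have J: "Ins \<noteq> {} \<and> open Ins \<and> connected Ins \<and> Out \<noteq> {} \<and> open Out \<and> connected Out \<and>
          bounded Ins \<and> \<not> bounded Out \<and> Ins \<inter> Out = {} \<and> Ins \<union> Out = - S \<and>
          frontier Ins = S \<and> frontier Out = S"
    unfolding Ins_def Out_def S_def by (rule Jordan_inside_outside[OF sp loop])
  have S0: "0 \<in> S"
  proof -
    have "None \<in> f ` sphere 0 1" using inf fim by simp
    then obtain y where y: "y \<in> sphere 0 1" "f y = None" by (metis imageE)
    hence "\<phi> y = 0" by (simp add: \<phi>_def M_def Mb_def)
    hence "0 \<in> \<phi> ` sphere 0 1" using y(1) by (metis image_eqI)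
    thus ?thesis by (simp add: S)
  qed
  define m where "m z = 1 / (z - a)" for z
  have fp\<gamma>: "finite_part \<gamma> = {z. z \<noteq> a \<and> m z \<in> S}"
  proof (rule set_eqI, rule iffI)
    fix z assume "z \<in> finite_part \<gamma>"
    hence z: "Some z \<in> \<gamma>" by (simp add: finite_part_def)
    hence za: "z \<noteq> a" using a\<gamma> by auto
    have "Some z \<in> f ` sphere 0 1" using z fim by simp
    then obtain y where y: "y \<in> sphere 0 1" "f y = Some z" by (metis imageE)
    have "\<phi> y = m z" by (simp add: \<phi>_def M_def Mb_def y m_def)
    hence "m z \<in> S" unfolding S using y(1) by (metis image_eqI)
    thus "z \<in> {z. z \<noteq> a \<and> m z \<in> S}" using za by simp
  next
    fix z assume "z \<in> {z. z \<noteq> a \<and> m z \<in> S}"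
    hence za: "z \<noteq> a" and "m z \<in> S" by auto
    then obtain y where y: "y \<in> sphere 0 1" "\<phi> y = m z" using S by auto
    have fy: "f y \<in> \<gamma>" using y fim by auto
    have "M (f y) = M (Some z)" using y by (simp add: \<phi>_def M_def Mb_def m_def)
    moreover have "f y \<noteq> Some a" using fy a\<gamma> by auto
    ultimately have "f y = Some z" using Minj za by blast
    thus "z \<in> finite_part \<gamma>" using fy by (simp add: finite_part_def)
  qed
  have "bounded (Ins \<union> S)"
    using J compact_imp_bounded[OF compact_simple_path_image[OF sp]] by (simp add: S_def)
  then obtain R where R: "R > 0" "\<And>x. x \<in> Ins \<union> S \<Longrightarrow> norm x \<le> R"
    using bounded_pos by metis
  have bigOut: "w \<in> Out" if "norm w > R" for w
  proof -
    have "w \<notin> Ins \<union> S" using R(2) that by force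
    thus ?thesis using J by blast
  qed
  define W1 where "W1 = {z. z \<noteq> a \<and> m z \<in> Ins}"
  define W2 where "W2 = {z. z = a \<or> m z \<in> Out}"
  have mc: "continuous_on (- {a}) m" unfolding m_def by (intro continuous_intros) auto
  have W12: "W1 \<inter> W2 = {}" "W1 \<union> W2 = - finite_part \<gamma>"
    using J by (auto simp: W1_def W2_def fp\<gamma>)
  have oW1: "open W1"
  proof -
    have "open (m -` Ins \<inter> (- {a}))" using mc J by (subst (asm) continuous_on_open_vimage) auto
    moreover have "W1 = m -` Ins \<inter> (- {a})" by (auto simp: W1_def)
    ultimately show ?thesis by simp
  qed
  have oW2: "open W2"
  proof -
    have "open (m -` Out \<inter> (- {a}))" using mc J by (subst (asm) continuous_on_open_vimage) auto
    moreover have "W2 = (m -` Out \<inter> (- {a})) \<union> ball a (1 / R)"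
    proof (rule set_eqI, rule iffI)
      fix z assume z: "z \<in> W2"
      show "z \<in> (m -` Out \<inter> (- {a})) \<union> ball a (1 / R)"
        using z R by (cases "z = a") (auto simp: W2_def)
    next
      fix z assume z: "z \<in> (m -` Out \<inter> (- {a})) \<union> ball a (1 / R)"
      show "z \<in> W2"
      proof (cases "z = a \<or> m z \<in> Out")
        case False
        hence za: "z \<noteq> a" and "z \<in> ball a (1 / R)" using z by auto
        hence "cmod (z - a) < 1 / R" by (simp add: dist_norm norm_minus_commute)
        hence "R < 1 / cmod (z - a)" using za R(1) by (simp add: field_simps)
        hence "norm (m z) > R" by (simp add: m_def norm_divide)
        hence "m z \<in> Out" by (rule bigOut)
        thus ?thesis by (simp add: W2_def)
      qed (auto simp: W2_def)
    qed
    ultimately show ?thesis by (simp add: open_Un)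
  qed
  define \<psi> where "\<psi> w = a + 1 / w" for w
  have Ins0: "0 \<notin> Ins" "0 \<notin> Out" using J S0 by auto
  have W1img: "W1 = \<psi> ` Ins"
  proof (rule set_eqI, rule iffI)
    fix z assume "z \<in> W1"
    hence "z \<noteq> a" "m z \<in> Ins" by (auto simp: W1_def)
    moreover have "z = \<psi> (m z)" using \<open>z \<noteq> a\<close> by (simp add: \<psi>_def m_def)
    ultimately show "z \<in> \<psi> ` Ins" by blast
  next
    fix z assume "z \<in> \<psi> ` Ins"
    then obtain w where w: "w \<in> Ins" "z = \<psi> w" by blast
    hence "w \<noteq> 0" using Ins0 by metis
    thus "z \<in> W1" using w by (simp add: W1_def \<psi>_def m_def)
  qed
  have Outimg: "\<psi> ` Out \<subseteq> W2"
  proof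
    fix z assume "z \<in> \<psi> ` Out"
    then obtain w where w: "w \<in> Out" "z = \<psi> w" by blast
    hence "w \<noteq> 0" using Ins0 by metis
    thus "z \<in> W2" using w by (simp add: W2_def \<psi>_def m_def)
  qed
  have W2img: "W2 = insert a (\<psi> ` Out)"
  proof
    show "insert a (\<psi> ` Out) \<subseteq> W2" using Outimg by (auto simp: W2_def)
    show "W2 \<subseteq> insert a (\<psi> ` Out)"
    proof
      fix z assume "z \<in> W2"
      show "z \<in> insert a (\<psi> ` Out)"
      proof (cases "z = a")
        case False
        hence "m z \<in> Out" using \<open>z \<in> W2\<close> by (simp add: W2_def)
        moreover have "z = \<psi> (m z)" using False by (simp add: \<psi>_def m_def)
        ultimately show ?thesis by blast
      qed simp
    qed
  qed
  have \<psi>c: "continuous_on (- {0}) \<psi>" unfolding \<psi>_def by (intro continuous_intros) auto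
  have cW1: "connected W1" unfolding W1img
    by (rule connected_continuous_image) (use J Ins0 in \<open>auto intro: continuous_on_subset[OF \<psi>c]\<close>)
  have cOut: "connected (\<psi> ` Out)"
    by (rule connected_continuous_image) (use J Ins0 in \<open>auto intro: continuous_on_subset[OF \<psi>c]\<close>)
  have "a \<in> closure (\<psi> ` Out)"
    unfolding closure_approachable
  proof (intro allI impI)
    fix \<epsilon> :: real assume \<epsilon>: "\<epsilon> > 0"
    define w where "w = complex_of_real (R + 1 / \<epsilon>)"
    have "norm w = \<bar>R + 1 / \<epsilon>\<bar>" unfolding w_def by (rule norm_of_real)
    hence nw: "norm w = R + 1 / \<epsilon>" using R \<epsilon> by simp
    hence "w \<in> Out" using \<epsilon> by (intro bigOut) simp
    moreover have "dist (\<psi> w) a < \<epsilon>"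
    proof -
      have "dist (\<psi> w) a = 1 / norm w" by (simp add: \<psi>_def dist_norm norm_divide)
      also have "\<dots> < \<epsilon>"
      proof -
        have "1 / \<epsilon> > 0" using \<epsilon> by simp
        hence pos: "norm w > 0" using nw R by linarith
        have "1 < \<epsilon> * norm w" using nw R \<epsilon> by (simp add: field_simps)
        thus ?thesis using pos by (simp add: divide_less_eq mult.commute)
      qed
      finally show ?thesis .
    qed
    ultimately show "\<exists>y\<in>\<psi> ` Out. dist y a < \<epsilon>" using imageI[of w Out \<psi>] by blast
  qed
  hence sub2: "insert a (\<psi> ` Out) \<subseteq> closure (\<psi> ` Out)" using closure_subset by blast
  have sub1: "\<psi> ` Out \<subseteq> insert a (\<psi> ` Out)" by blast
  have cW2: "connected W2" unfolding W2img
    by (rule connected_intermediate_closure[OF cOut sub1 sub2])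
  have cl1: "finite_part \<gamma> \<subseteq> closure W1"
  proof
    fix z assume "z \<in> finite_part \<gamma>"
    hence z: "z \<noteq> a" "m z \<in> S" by (auto simp: fp\<gamma>)
    have "m z \<in> frontier Ins" using J z(2) by simp
    hence "m z \<in> closure Ins" by (simp add: frontier_def)
    moreover have "m z \<noteq> 0" using z by (simp add: m_def)
    ultimately have "a + 1 / m z \<in> closure {z. z \<noteq> a \<and> 1 / (z - a) \<in> Ins}"
      using inv_closure_lemma[OF Ins0(1)] by blast
    moreover have "{z. z \<noteq> a \<and> 1 / (z - a) \<in> Ins} = W1" by (simp add: W1_def m_def)
    ultimately have "a + 1 / m z \<in> closure W1" by simp
    thus "z \<in> closure W1" using z by (simp add: m_def)
  qed
  have cl2: "finite_part \<gamma> \<subseteq> closure W2"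
  proof
    fix z assume "z \<in> finite_part \<gamma>"
    hence z: "z \<noteq> a" "m z \<in> S" by (auto simp: fp\<gamma>)
    have "m z \<in> frontier Out" using J z(2) by simp
    hence "m z \<in> closure Out" by (simp add: frontier_def)
    moreover have "m z \<noteq> 0" using z by (simp add: m_def)
    ultimately have "a + 1 / m z \<in> closure {z. z \<noteq> a \<and> 1 / (z - a) \<in> Out}"
      using inv_closure_lemma[OF Ins0(2)] by blast
    moreover have "{z. z \<noteq> a \<and> 1 / (z - a) \<in> Out} \<subseteq> W2" by (auto simp: W2_def m_def)
    ultimately have "a + 1 / m z \<in> closure W2" using closure_mono by blast
    thus "z \<in> closure W2" using z by (simp add: m_def)
  qed
  define U1 where "U1 = Some ` W1"
  define U2 where "U2 = Some ` W2"
  have oU: "openin riemann_sphere U1" "openin riemann_sphere U2"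
    using oW1 oW2 by (simp_all add: U1_def U2_def RS_open_Some)
  have cU: "connectedin riemann_sphere U1" "connectedin riemann_sphere U2"
    unfolding U1_def U2_def using cW1 cW2
    by (auto intro: connectedin_continuous_map_image[OF cont_Some] simp: connectedin_iff_connected)
  have dU: "U1 \<inter> U2 = {}" using W12 by (auto simp: U1_def U2_def)
  have uU: "U1 \<union> U2 = - \<gamma>"
  proof (rule set_eqI)
    fix x show "x \<in> U1 \<union> U2 \<longleftrightarrow> x \<in> - \<gamma>"
    proof (cases x)
      case None thus ?thesis using inf by (auto simp: U1_def U2_def)
    next
      case (Some z)
      have "x \<in> U1 \<union> U2 \<longleftrightarrow> z \<in> W1 \<union> W2" by (auto simp: U1_def U2_def Some)
      also have "\<dots> \<longleftrightarrow> z \<notin> finite_part \<gamma>" using W12 by blast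
      finally show ?thesis by (simp add: Some finite_part_def)
    qed
  qed
  have "I = U1 \<or> I = U2" using components_two[OF oU cU dU uU I] .
  moreover have "E = U1 \<or> E = U2" using components_two[OF oU cU dU uU E] .
  ultimately have "(finite_part I = W1 \<and> finite_part E = W2) \<or> (finite_part I = W2 \<and> finite_part E = W1)"
    using IE by (auto simp: U1_def U2_def)
  thus ?thesis using oW1 oW2 W12 cl1 cl2 by auto
qed

theorem proposition3p4:
  fixes p q :: "complex poly" and n :: nat
    and \<gamma> Intr Ext :: "nat \<Rightarrow> complex option set"
  assumes "q \<noteq> 0" and "coprime p q"
    and "rat_degree p q \<ge> 2"
    and "repelling_fixed_at_infinity p q"
    and "n \<ge> 2"
    and "independent_jordan_curves n \<gamma> Intr Ext"
    and "\<forall>k\<in>{1..n}. None \<in> \<gamma> k"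
    and "\<forall>z. poly q z \<noteq> 0 \<and> rat_fun p q z = z \<longrightarrow> Some z \<in> (\<Union>k\<in>{1..n}. Intr k)"
    and "\<forall>k\<in>{1..n}.
           pole_count p q (finite_part (riemann_sphere closure_of Ext k)) =
           fixpt_count p q (finite_part (riemann_sphere closure_of Ext k))"
  shows "pole_count p q (finite_part (riemann_sphere closure_of (\<Inter>k\<in>{1..n}. Ext k))) = n - 1"
proof -
  note q = assms(1) and cop = assms(2) and ind = assms(6) and inf = assms(7)
    and fixin = assms(8) and hyp = assms(9)
  define r where "r = p - [:0, 1:] * q"
  define K where "K = {1..n}"
  define G' where "G' k = finite_part (\<gamma> k)" for k
  define I' where "I' k = finite_part (Intr k)" for k
  define E' where "E' k = finite_part (Ext k)" for k
  have deg: "degree p = Suc (degree q)" "lead_coeff p \<noteq> lead_coeff q"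
    using repelling_degree[OF q assms(4)] by auto
  have xq: "[:0, 1:] * q = pCons 0 q" by simp
  have cr: "coeff r (Suc (degree q)) \<noteq> 0" using deg by (simp add: r_def xq)
  hence r0: "r \<noteq> 0" by auto
  have "degree r \<le> Suc (degree q)"
    unfolding r_def xq using deg q by (intro degree_diff_le) (auto simp: degree_pCons_eq)
  hence degr: "degree r = Suc (degree q)" using cr le_degree by (metis le_antisym)
  have JF: "open (I' k) \<and> open (E' k) \<and> I' k \<inter> E' k = {} \<and> I' k \<union> E' k = - G' k
               \<and> G' k \<subseteq> closure (I' k) \<and> G' k \<subseteq> closure (E' k)" if k: "k \<in> K" for k
    unfolding I'_def E'_def G'_def
  proof (rule jordan_RS_transfer)
    show "jordan_curve_RS (\<gamma> k)" using ind k by (simp add: independent_jordan_curves_def K_def)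
    show "None \<in> \<gamma> k" using inf k by (simp add: K_def)
    show "Intr k \<in> connected_components_of (subtopology riemann_sphere (- \<gamma> k))"
      "Ext k \<in> connected_components_of (subtopology riemann_sphere (- \<gamma> k))" "Intr k \<noteq> Ext k"
      using ind k by (simp_all add: independent_jordan_curves_def K_def)
  qed
  have disjI: "I' i \<inter> I' j = {}" if "i \<in> K" "j \<in> K" "i \<noteq> j" for i j
  proof -
    have "Intr i \<inter> Intr j = {}" using ind that by (simp add: independent_jordan_curves_def K_def)
    thus ?thesis by (auto simp: I'_def finite_part_def)
  qed
  have finG: "finite (G' i \<inter> G' j)" if "i \<in> K" "j \<in> K" "i \<noteq> j" for i j
  proof -
    have "finite (\<gamma> i \<inter> \<gamma> j)" using ind that by (simp add: independent_jordan_curves_def K_def)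
    hence "finite (Some -` (\<gamma> i \<inter> \<gamma> j))" by (rule finite_vimageI) simp
    moreover have "G' i \<inter> G' j = Some -` (\<gamma> i \<inter> \<gamma> j)" by (auto simp: G'_def finite_part_def)
    ultimately show ?thesis by simp
  qed
  have clE: "finite_part (riemann_sphere closure_of Ext k) = - I' k" if "k \<in> K" for k
  proof -
    have "finite_part (riemann_sphere closure_of Ext k) = closure (E' k)"
      by (simp add: RS_closure_fp E'_def)
    also have "\<dots> = - I' k" using JF[OF that] by (intro closure_ext_eq[of _ _ "G' k"]) auto
    finally show ?thesis .
  qed
  define U where "U = (\<Union>k\<in>K. I' k)"
  have clA: "finite_part (riemann_sphere closure_of (\<Inter>k\<in>K. Ext k)) = - U"
  proof -
    have "finite_part (riemann_sphere closure_of (\<Inter>k\<in>K. Ext k)) = closure (finite_part (\<Inter>k\<in>K. Ext k))"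
      by (rule RS_closure_fp)
    also have "finite_part (\<Inter>k\<in>K. Ext k) = (\<Inter>k\<in>K. E' k)" by (auto simp: E'_def finite_part_def)
    also have "closure (\<Inter>k\<in>K. E' k) = - U" unfolding U_def
      by (rule closure_Inter_ext[OF _ JF disjI finG]) (simp_all add: K_def)
    finally show ?thesis .
  qed
  have pc: "pole_count p q S = cnt q S" for S by (simp add: pole_count_def cnt_def)
  have fc: "fixpt_count p q S = cnt r S" for S by (simp add: fixpt_count_def cnt_def r_def)
  have rootsU: "{z. poly r z = 0} \<subseteq> U"
  proof
    fix z assume "z \<in> {z. poly r z = 0}"
    hence pz: "poly p z = z * poly q z" by (simp add: r_def)
    have qz: "poly q z \<noteq> 0"
    proof
      assume "poly q z = 0"
      hence "poly p z = 0" using pz by simp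
      thus False using coprime_no_common_root[OF cop _ \<open>poly q z = 0\<close>] by blast
    qed
    hence "rat_fun p q z = z" using pz by (simp add: rat_fun_def)
    hence "Some z \<in> (\<Union>k\<in>{1..n}. Intr k)" using fixin qz by blast
    thus "z \<in> U" by (auto simp: U_def I'_def K_def finite_part_def)
  qed
  have finK: "finite K" by (simp add: K_def)
  have eqk: "cnt r (I' k) = Suc (cnt q (I' k))" if k: "k \<in> K" for k
  proof -
    have "k \<in> {1..n}" using k by (simp add: K_def)
    with hyp have h0: "pole_count p q (finite_part (riemann_sphere closure_of Ext k)) =
           fixpt_count p q (finite_part (riemann_sphere closure_of Ext k))" by (rule bspec)
    have h: "cnt q (- I' k) = cnt r (- I' k)" using h0 unfolding clE[OF k] pc fc .
    have "cnt q (I' k) + cnt q (- I' k) = degree q" by (rule cnt_split[OF q])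
    moreover have "cnt r (I' k) + cnt r (- I' k) = Suc (degree q)" using cnt_split[OF r0] degr by simp
    ultimately show ?thesis using h by linarith
  qed
  have "Suc (degree q) = cnt r U" using cnt_superset[OF r0 rootsU] degr by simp
  also have "\<dots> = (\<Sum>k\<in>K. cnt r (I' k))" unfolding U_def by (rule cnt_UN[OF r0 finK disjI])
  also have "\<dots> = (\<Sum>k\<in>K. Suc (cnt q (I' k)))" using eqk by simp
  also have "\<dots> = (\<Sum>k\<in>K. (1::nat)) + (\<Sum>k\<in>K. cnt q (I' k))"
    by (subst sum.distrib[symmetric]) simp
  also have "(\<Sum>k\<in>K. (1::nat)) = n" by (simp add: K_def)
  also have "(\<Sum>k\<in>K. cnt q (I' k)) = cnt q U" unfolding U_def by (rule cnt_UN[OF q finK disjI, symmetric])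
  finally have e1: "Suc (degree q) = n + cnt q U" .
  have e2: "cnt q U + cnt q (- U) = degree q" by (rule cnt_split[OF q])
  have "pole_count p q (finite_part (riemann_sphere closure_of (\<Inter>k\<in>{1..n}. Ext k))) = cnt q (- U)"
    using clA pc by (simp add: K_def)
  also have "\<dots> = n - 1" using e1 e2 by linarith
  finally show ?thesis .
qed

end
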